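(* Let $P\ge3$ be an integer and $\alpha=a/q$ with $q$ a positive integer and $\gcd(a,q)=1$. Let $k$ be a positive integer with $g=\gcd(k,q)\le4$. Then for every positive integer $Q$, every real number $\beta$ and every $\varepsilon$ with $0<\varepsilon\le1$, $$\sum_{x=0}^{Q-1}\min\Big(P,\frac{1}{2\|k\alpha x+\beta\|}\Big)\le\Big(1+\frac{gQ}{q}\Big)(P+q)\frac{2P^{\varepsilon}}{\varepsilon}.$$
   Context: For a real number $t$, $\|t\|=\min_{n\in\mathbb{Z}}|t-n|$ is the distance from $t$ to the nearest integer; when $\|t\|=0$ the minimum $\min(P,1/(2\|t\|))$ is taken to be $P$. *)

theory Defs
  imports Complex_Main
begin

definition dist_int :: "real \<Rightarrow> real" where
  "dist_int t = \<bar>t - of_int (round t)\<bar>"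

definition minrec :: "real \<Rightarrow> real \<Rightarrow> real" where
  "minrec P t = (if dist_int t = 0 then P else min P (1 / (2 * dist_int t)))"

end

theory Submission
  imports Defs "HOL-Analysis.Convex"
begin

lemma dist_int_shift: "dist_int (t + of_int n) = dist_int t"
proof -
  have "\<bar>t + of_int n - of_int (round (t + of_int n))\<bar> \<le> \<bar>t + of_int n - of_int (round t + n)\<bar>"
    by (rule round_diff_minimal)
  moreover have "\<bar>t - of_int (round t)\<bar> \<le> \<bar>t - of_int (round (t + of_int n) - n)\<bar>"
    by (rule round_diff_minimal)
  ultimately show ?thesis unfolding dist_int_def by (simp add: algebra_simps)
qed

lemma minrec_shift: "minrec P (t + of_int n) = minrec P t"
  unfolding minrec_def dist_int_shift ..

lemma minrec_le_P: "minrec P t \<le> P"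
  unfolding minrec_def by auto

lemma minrec_bound:
  assumes "c > 0" "\<And>n::int. \<bar>t - of_int n\<bar> \<ge> c"
  shows "minrec P t \<le> min P (1/(2*c))"
proof -
  have d: "dist_int t \<ge> c" unfolding dist_int_def using assms(2) .
  hence "1/(2*dist_int t) \<le> 1/(2*c)" using assms(1) by (simp add: frac_le)
  thus ?thesis using d assms(1) unfolding minrec_def by auto
qed

lemma psum:
  fixes e :: real
  assumes "0 < e" "e \<le> 1" "n \<ge> 1"
  shows "(\<Sum>j\<in>{1..n}. real j powr (e-1)) \<le> real n powr e / e"
  using assms(3)
proof (induction n rule: dec_induct)
  case base
  then show ?case using assms by simp
next
  case (step n)
  have Y: "real n powr e * real (n+1) powr (1-e) \<le> e * real n + (1-e) * real (n+1)"
    by (rule Youngs_inequality_0) (use assms step in auto)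
  have "real n powr e = (real n powr e * real (n+1) powr (1-e)) * real (n+1) powr (e - 1)"
    by (simp add: mult.assoc flip: powr_add)
  also have "\<dots> \<le> (e * real n + (1-e) * real (n+1)) * real (n+1) powr (e - 1)"
    by (rule mult_right_mono[OF Y]) simp
  also have "\<dots> = (real (n+1) - e) * real (n+1) powr (e - 1)"
    by (simp add: algebra_simps)
  also have "\<dots> = real (n+1) powr e - e * real (n+1) powr (e - 1)"
  proof -
    have "real (n+1) * real (n+1) powr (e - 1) = real (n+1) powr e"
      using powr_mult_base[of "real (n+1)" "e-1"] by simp
    thus ?thesis by (simp add: algebra_simps)
  qed
  finally have "real n powr e + e * real (n+1) powr (e-1) \<le> real (n+1) powr e" by simp
  hence "(real n powr e + e * real (n+1) powr (e-1)) / e \<le> real (n+1) powr e / e"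
    using assms by (simp add: divide_right_mono)
  moreover have "(real n powr e + e * real (n+1) powr (e-1)) / e = real n powr e / e + real (n+1) powr (e-1)"
    using assms by (simp add: field_simps)
  ultimately have "real n powr e / e + real (n+1) powr (e-1) \<le> real (n+1) powr e / e" by simp
  then show ?case using step by (simp add: add.commute)
qed

lemma minpow:
  fixes P y e :: real
  assumes "P > 0" "y > 0" "0 < e" "e \<le> 1"
  shows "min P y \<le> P powr e * y powr (1-e)"
proof (cases "y \<le> P")
  case True
  have "min P y = y powr e * y powr (1-e)" using True assms by (simp flip: powr_add)
  also have "\<dots> \<le> P powr e * y powr (1-e)"
    by (rule mult_right_mono) (use True assms in \<open>auto intro: powr_mono2\<close>)
  finally show ?thesis .
next
  case False
  have "min P y = P powr e * P powr (1-e)" using False assms by (simp flip: powr_add)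
  also have "\<dots> \<le> P powr e * y powr (1-e)"
    by (rule mult_left_mono) (use False assms in \<open>auto intro: powr_mono2\<close>)
  finally show ?thesis .
qed

lemma block:
  fixes P e t :: real and n :: nat
  assumes P1: "P \<ge> 1" and n1: "n \<ge> 1" and t0: "0 \<le> t" and t1: "t < 1" and e0: "0 < e" and e1: "e \<le> 1"
  shows "(\<Sum>s<n. minrec P ((real s + t)/real n)) \<le> 2*P + 2*(P powr e * real n / e)"
proof -
  define h where "h s = (if s = 0 then P else min P (real n/(2*real s)))" for s::nat
  have h0: "h s \<ge> 0" for s unfolding h_def using P1 by auto
  have per: "minrec P ((real s + t)/real n) \<le> h s + h (n - Suc s)" if sn: "s < n" for s
  proof (cases "s = 0 \<or> n - Suc s = 0")
    case True
    then have "P \<le> h s + h (n - Suc s)" using h0[of s] h0[of "n - Suc s"] unfolding h_def by auto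
    then show ?thesis using minrec_le_P[of P] order_trans by blast
  next
    case False
    hence s1: "s \<ge> 1" and s2: "n - Suc s \<ge> 1" by auto
    have rs: "real (n - Suc s) = real n - real s - 1" using sn by simp
    define c where "c = min (real s / real n) (real (n - Suc s) / real n)"
    have c0: "c > 0" unfolding c_def using s1 s2 n1 by auto
    have dist: "\<bar>(real s + t)/real n - of_int m\<bar> \<ge> c" for m :: int
    proof (cases "m \<le> 0")
      case True
      have "real s / real n \<le> (real s + t)/real n" using t0 n1 by (simp add: divide_right_mono)
      moreover have "(real s + t)/real n \<le> (real s + t)/real n - of_int m" using True by simp
      ultimately show ?thesis unfolding c_def by linarith
    next
      case False
      hence m1: "of_int m \<ge> (1::real)" by simp
      have "(real s + t)/real n = (real s + t)/real n" ..
      have "real (n - Suc s) / real n \<le> 1 - (real s + t)/real n"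
        using rs t1 n1 by (simp add: field_simps)
      thus ?thesis unfolding c_def using m1 by linarith
    qed
    have "minrec P ((real s + t)/real n) \<le> min P (1/(2*c))"
      by (rule minrec_bound[OF c0 dist])
    also have "\<dots> \<le> h s + h (n - Suc s)"
    proof (cases "real s / real n \<le> real (n - Suc s) / real n")
      case True
      hence "c = real s / real n" unfolding c_def by simp
      hence "1/(2*c) = real n/(2*real s)" by simp
      thus ?thesis using s1 h0[of "n - Suc s"] unfolding h_def by auto
    next
      case False
      hence "c = real (n - Suc s) / real n" unfolding c_def by simp
      hence "1/(2*c) = real n/(2*real (n - Suc s))" by simp
      thus ?thesis using s2 h0[of s] unfolding h_def by auto
    qed
    finally show ?thesis .
  qed
  have "(\<Sum>s<n. minrec P ((real s + t)/real n)) \<le> (\<Sum>s<n. h s + h (n - Suc s))"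
    by (rule sum_mono) (use per in auto)
  also have "\<dots> = (\<Sum>s<n. h s) + (\<Sum>s<n. h (n - Suc s))" by (rule sum.distrib)
  also have "(\<Sum>s<n. h (n - Suc s)) = (\<Sum>s<n. h s)" by (rule sum.nat_diff_reindex)
  finally have A: "(\<Sum>s<n. minrec P ((real s + t)/real n)) \<le> 2 * (\<Sum>s<n. h s)" by simp
  have Pp: "P > 0" using P1 by simp
  have "{..<n} = insert 0 {1..<n}" using n1 by auto
  hence "(\<Sum>s<n. h s) = h 0 + (\<Sum>s\<in>{1..<n}. h s)" by simp
  also have "h 0 = P" unfolding h_def by simp
  also have "(\<Sum>s\<in>{1..<n}. h s) \<le> (\<Sum>s\<in>{1..<n}. P powr e * real n powr (1-e) * real s powr (e-1))"
  proof (rule sum_mono)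
    fix s assume "s \<in> {1..<n}"
    hence s1: "s \<ge> 1" by simp
    have "h s = min P (real n/(2*real s))" unfolding h_def using s1 by simp
    also have "\<dots> \<le> min P (real n / real s)"
    proof -
      have "real n/(2*real s) \<le> real n/real s" using s1 by (simp add: divide_left_mono)
      thus ?thesis by (auto simp: min_def)
    qed
    also have "\<dots> \<le> P powr e * (real n / real s) powr (1-e)"
      by (rule minpow) (use Pp n1 s1 e0 e1 in auto)
    also have "(real n / real s) powr (1-e) = real n powr (1-e) * real s powr (e-1)"
    proof -
      have "real s powr (e-1) = inverse (real s powr (1-e))" using powr_minus[of "real s" "1-e"] by simp
      moreover have "(real n / real s) powr (1-e) = real n powr (1-e) / real s powr (1-e)"
        using s1 n1 by (simp add: powr_divide)
      ultimately show ?thesis by (simp add: divide_inverse)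
    qed
    finally show "h s \<le> P powr e * real n powr (1-e) * real s powr (e-1)" by (simp add: mult.assoc)
  qed
  also have "\<dots> \<le> (\<Sum>s\<in>{1..n}. P powr e * real n powr (1-e) * real s powr (e-1))"
    by (rule sum_mono2) auto
  also have "\<dots> = P powr e * real n powr (1-e) * (\<Sum>s\<in>{1..n}. real s powr (e-1))"
    by (simp add: sum_distrib_left)
  also have "\<dots> \<le> P powr e * real n powr (1-e) * (real n powr e / e)"
    by (rule mult_left_mono[OF psum[OF e0 e1 n1]]) simp
  also have "\<dots> = P powr e * real n / e"
    using n1 by (simp flip: powr_add)
  finally show ?thesis using A by simp
qed

lemma aux2P: fixes P Y e :: real assumes "Y/e \<ge> 1" "P \<ge> 3" "e > 0"
  shows "2 * P \<le> P * (2 * Y / e)"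
proof -
  have "P * 1 \<le> P * (Y / e)" by (rule mult_left_mono) (use assms in auto)
  hence h: "P \<le> P * (Y / e)" by (simp only: mult_1_right)
  have "2 * P \<le> 2 * (P * (Y / e))" using h by simp
  also have "\<dots> = P * (2 * Y / e)" by simp
  finally show ?thesis .
qed

lemma minrec_nonneg: "P \<ge> 0 \<Longrightarrow> minrec P t \<ge> 0"
  unfolding minrec_def dist_int_def by auto

theorem lemma10:
  fixes P :: int and a :: int and q :: nat and k :: nat and Q :: nat
    and \<beta> \<epsilon> :: real
  assumes "P \<ge> 3" and "q > 0" and "coprime a (int q)"
    and "k > 0" and "gcd k q \<le> 4"
    and "Q > 0" and "0 < \<epsilon>" and "\<epsilon> \<le> 1"
  shows "(\<Sum>x<Q. minrec (real_of_int P)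
            (real k * (real_of_int a / real q) * real x + \<beta>))
         \<le> (1 + real (gcd k q) * real Q / real q) * (real_of_int P + real q)
            * (2 * real_of_int P powr \<epsilon> / \<epsilon>)"
proof -
  define g where "g = gcd k q"
  define n where "n = q div g"
  define k' where "k' = k div g"
  define a' where "a' = int k' * a"
  have g0: "g > 0" unfolding g_def using assms by simp
  have qg: "q = g * n" unfolding n_def g_def by simp
  have kg: "k = g * k'" unfolding k'_def g_def by simp
  have n1: "n \<ge> 1" using qg assms(2) by (cases n) auto
  have nq: "n \<le> q" using qg g0 by simp
  have cop: "coprime a' (int n)"
  proof -
    have "coprime k' n" unfolding k'_def n_def g_def using assms(4) by (intro div_gcd_coprime) auto
    moreover have "coprime a (int n)" using assms(3) qg by (simp add: coprime_mult_right_iff)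
    ultimately show ?thesis unfolding a'_def by (simp add: coprime_mult_left_iff)
  qed
  have ka: "real k * (real_of_int a / real q) = of_int a' / real n"
    unfolding a'_def using qg kg g0 by (simp add: field_simps)
  define b where "b = \<lfloor>\<beta> * real n\<rfloor>"
  define t where "t = \<beta> * real n - of_int b"
  have t0: "0 \<le> t" and t1: "t < 1" unfolding t_def b_def by linarith+
  define z where "z x = a' * int x + b" for x :: nat
  define s where "s x = nat (z x mod int n)" for x
  define F where "F y = minrec (real_of_int P) ((real y + t)/real n)" for y :: nat
  have sint: "int (s x) = z x mod int n" for x unfolding s_def using n1 by simp
  have sn: "s x < n" for x unfolding s_def using n1 by (simp add: nat_less_iff)
  have term_eq: "minrec (real_of_int P) (real k * (real_of_int a / real q) * real x + \<beta>) = F (s x)" for x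
  proof -
    have zz: "of_int (z x) = real n * of_int (z x div int n) + of_int (z x mod int n)"
      by (metis of_int_add of_int_mult of_int_of_nat_eq div_mult_mod_eq mult.commute)
    have sx: "real (s x) = of_int (z x mod int n)" unfolding s_def using n1 by simp
    have "real k * (real_of_int a / real q) * real x + \<beta> = (of_int (z x) + t) / real n"
      unfolding ka z_def t_def using n1 by (simp add: field_simps)
    also have "\<dots> = (real (s x) + t)/real n + of_int (z x div int n)"
      unfolding zz sx using n1 by (simp add: field_simps)
    finally show ?thesis unfolding F_def by (simp add: minrec_shift)
  qed
  define m where "m = (Q + n - 1) div n"
  have card_fib: "card {x \<in> {..<Q}. s x = y} \<le> m" for y
  proof -
    have inj: "inj_on (\<lambda>x. x div n) {x \<in> {..<Q}. s x = y}"
    proof (rule inj_onI)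
      fix x1 x2 assume x1: "x1 \<in> {x \<in> {..<Q}. s x = y}" and x2: "x2 \<in> {x \<in> {..<Q}. s x = y}"
        and d: "x1 div n = x2 div n"
      have "s x1 = s x2" using x1 x2 by simp
      hence "int (s x1) = int (s x2)" by simp
      hence "z x1 mod int n = z x2 mod int n" using sint by simp
      hence "int n dvd z x1 - z x2" by (simp add: mod_eq_dvd_iff)
      hence "int n dvd a' * (int x1 - int x2)" unfolding z_def by (simp add: algebra_simps)
      hence "int n dvd int x1 - int x2" using cop by (simp add: coprime_dvd_mult_right_iff coprime_commute)
      hence "int x1 mod int n = int x2 mod int n" by (simp add: mod_eq_dvd_iff)
      hence "x1 mod n = x2 mod n" by (metis of_nat_eq_iff zmod_int)
      thus "x1 = x2" using d by (metis div_mult_mod_eq)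
    qed
    have img: "(\<lambda>x. x div n) ` {x \<in> {..<Q}. s x = y} \<subseteq> {..<m}"
    proof
      fix w assume "w \<in> (\<lambda>x. x div n) ` {x \<in> {..<Q}. s x = y}"
      then obtain x where x: "x < Q" "w = x div n" by auto
      have "x div n \<le> (Q - 1) div n" using x by (intro div_le_mono) simp
      moreover have "m = (Q - 1) div n + 1"
      proof -
        have "Q + n - 1 = (Q - 1) + n" using assms(6) by simp
        hence "m = ((Q - 1) + n) div n" unfolding m_def by simp
        also have "\<dots> = (Q - 1) div n + 1" using n1 by simp
        finally show ?thesis .
      qed
      ultimately show "w \<in> {..<m}" using x by simp
    qed
    have "card {x \<in> {..<Q}. s x = y} = card ((\<lambda>x. x div n) ` {x \<in> {..<Q}. s x = y})"
      using inj by (simp add: card_image)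
    also have "\<dots> \<le> card {..<m}" by (rule card_mono[OF _ img]) simp
    finally show ?thesis by simp
  qed
  have Fnn: "F y \<ge> 0" for y unfolding F_def using assms(1) by (intro minrec_nonneg) simp
  have "(\<Sum>x<Q. minrec (real_of_int P) (real k * (real_of_int a / real q) * real x + \<beta>))
        = (\<Sum>x<Q. F (s x))" by (rule sum.cong[OF refl term_eq])
  also have "\<dots> = (\<Sum>y<n. \<Sum>x\<in>{x \<in> {..<Q}. s x = y}. F (s x))"
    by (rule sum.group[symmetric]) (use sn in auto)
  also have "\<dots> = (\<Sum>y<n. real (card {x \<in> {..<Q}. s x = y}) * F y)"
    by (rule sum.cong) auto
  also have "\<dots> \<le> (\<Sum>y<n. real m * F y)"
    by (rule sum_mono, rule mult_right_mono) (use card_fib Fnn in auto)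
  also have "\<dots> = real m * (\<Sum>y<n. F y)" by (simp add: sum_distrib_left)
  also have "\<dots> \<le> real m * (2 * real_of_int P + 2 * (real_of_int P powr \<epsilon> * real n / \<epsilon>))"
    unfolding F_def by (rule mult_left_mono[OF block]) (use assms n1 t0 t1 in auto)
  also have "\<dots> \<le> (1 + real g * real Q / real q) * (real_of_int P + real q) * (2 * real_of_int P powr \<epsilon> / \<epsilon>)"
  proof -
    have "real m \<le> real (Q + n - 1) / real n" unfolding m_def by (rule of_nat_div_le_of_nat)
    also have "\<dots> \<le> 1 + real g * real Q / real q" using n1 qg g0 by (simp add: field_simps)
    finally have mb: "real m \<le> 1 + real g * real Q / real q" .
    have Pe: "real_of_int P powr \<epsilon> \<ge> 1" using assms by (intro ge_one_powr_ge_zero) auto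
    hence Pe2: "real_of_int P powr \<epsilon> / \<epsilon> \<ge> 1" using assms by (simp add: field_simps)
    have "2 * real_of_int P \<le> real_of_int P * (2 * real_of_int P powr \<epsilon> / \<epsilon>)"
      using Pe2 assms by (intro aux2P) auto
    moreover have "2 * (real_of_int P powr \<epsilon> * real n / \<epsilon>) \<le> real q * (2 * real_of_int P powr \<epsilon> / \<epsilon>)"
      using nq assms Pe by (simp add: field_simps mult_left_mono)
    ultimately have B0: "2 * real_of_int P + 2 * (real_of_int P powr \<epsilon> * real n / \<epsilon>)
        \<le> real_of_int P * (2 * real_of_int P powr \<epsilon> / \<epsilon>) + real q * (2 * real_of_int P powr \<epsilon> / \<epsilon>)"
      by (rule add_mono)
    have B: "2 * real_of_int P + 2 * (real_of_int P powr \<epsilon> * real n / \<epsilon>)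
        \<le> (real_of_int P + real q) * (2 * real_of_int P powr \<epsilon> / \<epsilon>)"
      using B0 by (simp only: distrib_right)
    have "0 \<le> 2 * real_of_int P + 2 * (real_of_int P powr \<epsilon> * real n / \<epsilon>)" using assms by simp
    hence "real m * (2 * real_of_int P + 2 * (real_of_int P powr \<epsilon> * real n / \<epsilon>))
       \<le> (1 + real g * real Q / real q) * (2 * real_of_int P + 2 * (real_of_int P powr \<epsilon> * real n / \<epsilon>))"
      using mb by (rule mult_right_mono[rotated])
    also have "\<dots> \<le> (1 + real g * real Q / real q) * ((real_of_int P + real q) * (2 * real_of_int P powr \<epsilon> / \<epsilon>))"
      by (rule mult_left_mono[OF B]) simp
    finally show ?thesis by (simp add: mult.assoc)
  qed
  finally show ?thesis unfolding g_def .
qed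

end
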